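(* Let $X_1=\mathbb{R}^6_{\ge0}$ with coordinates $x,y,z,u,v,w$, and let $G\le\mathrm{Sym}(6)$ be the group generated by the coordinate permutations $(u\ z)(v\ y)$ and $(w\ x)$; set $\mathbb{M}_{212}=X_1/G$ with quotient map $q$. Let $\mathbb{M}^{\mathrm{pl}}_{212}=q(\{(x,y,z,u,v,w)\in X_1: w\le x\le 2w\})\subset\mathbb{M}_{212}$. Then the link of $\mathbb{M}^{\mathrm{pl}}_{212}$, namely $q(\{w\le x\le 2w\}\cap\{x+y+z+u+v+w=1\})$, is contractible.
   Context: This is the cell of the moduli space of genus 3 tropical curves for the trivalent graph of type (212) (two loops attached by bridges to a pair of vertices joined by two parallel edges), with edge lengths $x,y,z,u,v,w$; $\mathbb{M}^{\mathrm{pl}}_{212}$ is the locus of such metric graphs arising (in the closure of smooth curves) as tropical plane quartics. *)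

theory Defs
  imports "HOL-Analysis.Analysis" "HOL-Combinatorics.Transposition"
begin

definition quot_topology :: "'a topology \<Rightarrow> ('a \<Rightarrow> 'b) \<Rightarrow> 'b topology" where
  "quot_topology T q = topology (\<lambda>U. U \<subseteq> q ` topspace T \<and> openin T {x \<in> topspace T. q x \<in> U})"

lemma istopology_quot:
  "istopology (\<lambda>U. U \<subseteq> q ` topspace T \<and> openin T {x \<in> topspace T. q x \<in> U})"
proof -
  define f where "f U = {x \<in> topspace T. q x \<in> U}" for U
  have i: "f (S \<inter> S') = f S \<inter> f S'" for S S'
    by (auto simp: f_def)
  have u: "f (\<Union>K) = \<Union>(f ` K)" for K
    by (auto simp: f_def)
  have "istopology (\<lambda>U. U \<subseteq> q ` topspace T \<and> openin T (f U))"
    unfolding istopology_def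
  proof (rule conjI; intro allI impI)
    fix S S' assume "S \<subseteq> q ` topspace T \<and> openin T (f S)"
      "S' \<subseteq> q ` topspace T \<and> openin T (f S')"
    then show "S \<inter> S' \<subseteq> q ` topspace T \<and> openin T (f (S \<inter> S'))"
      unfolding i by (auto intro: openin_Int)
  next
    fix K assume "\<forall>S\<in>K. S \<subseteq> q ` topspace T \<and> openin T (f S)"
    then show "\<Union>K \<subseteq> q ` topspace T \<and> openin T (f (\<Union>K))"
      unfolding u by (auto intro!: openin_Union)
  qed
  then show ?thesis by (simp add: f_def)
qed

datatype coord = Cx | Cy | Cz | Cu | Cv | Cw

lemma UNIV_coord: "(UNIV :: coord set) = {Cx, Cy, Cz, Cu, Cv, Cw}"
  using coord.exhaust by auto

instance coord :: finite
  by standard (simp add: UNIV_coord)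

definition perm_act :: "(coord \<Rightarrow> coord) \<Rightarrow> real^coord \<Rightarrow> real^coord" where
  "perm_act s p = (\<chi> i. p $ (s i))"

definition gen1 :: "coord \<Rightarrow> coord" where
  "gen1 = Transposition.transpose Cu Cz \<circ> Transposition.transpose Cv Cy"

definition gen2 :: "coord \<Rightarrow> coord" where
  "gen2 = Transposition.transpose Cw Cx"

text \<open>The group G generated by (u z)(v y) and (w x) (finite, so closure under
  composition with the generators suffices).\<close>
inductive_set G212 :: "(coord \<Rightarrow> coord) set" where
  G_id: "id \<in> G212"
| G_gen1: "g \<in> G212 \<Longrightarrow> gen1 \<circ> g \<in> G212"
| G_gen2: "g \<in> G212 \<Longrightarrow> gen2 \<circ> g \<in> G212"

definition X1 :: "(real^coord) set" where
  "X1 = {p. \<forall>i. 0 \<le> p $ i}"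

definition q212 :: "real^coord \<Rightarrow> (real^coord) set" where
  "q212 p = {perm_act \<sigma> p | \<sigma>. \<sigma> \<in> G212}"

definition M212 :: "(real^coord) set topology" where
  "M212 = quot_topology (top_of_set X1) q212"

definition Mpl212 :: "(real^coord) set set" where
  "Mpl212 = q212 ` {p \<in> X1. p $ Cw \<le> p $ Cx \<and> p $ Cx \<le> 2 * p $ Cw}"

definition link_Mpl212 :: "(real^coord) set set" where
  "link_Mpl212 = q212 ` {p \<in> X1. p $ Cw \<le> p $ Cx \<and> p $ Cx \<le> 2 * p $ Cw \<and>
      p $ Cx + p $ Cy + p $ Cz + p $ Cu + p $ Cv + p $ Cw = 1}"

end

theory Submission
  imports Defs
begin

lemma gen1_simps[simp]: "gen1 Cx = Cx" "gen1 Cy = Cv" "gen1 Cz = Cu" "gen1 Cu = Cz" "gen1 Cv = Cy" "gen1 Cw = Cw"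
  by (simp_all add: gen1_def Transposition.transpose_def)

lemma gen2_simps[simp]: "gen2 Cx = Cw" "gen2 Cy = Cy" "gen2 Cz = Cz" "gen2 Cu = Cu" "gen2 Cv = Cv" "gen2 Cw = Cx"
  by (simp_all add: gen2_def Transposition.transpose_def)

lemma fun_coord_eq: "(f::coord \<Rightarrow> coord) = g \<longleftrightarrow> f Cx = g Cx \<and> f Cy = g Cy \<and> f Cz = g Cz \<and> f Cu = g Cu \<and> f Cv = g Cv \<and> f Cw = g Cw"
proof
  assume h: "f Cx = g Cx \<and> f Cy = g Cy \<and> f Cz = g Cz \<and> f Cu = g Cu \<and> f Cv = g Cv \<and> f Cw = g Cw"
  show "f = g"
  proof
    fix x show "f x = g x" using h by (cases x) auto
  qed
qed simp

lemma gg1: "gen1 \<circ> gen1 = id" by (simp add: fun_coord_eq)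
lemma gg2: "gen2 \<circ> gen2 = id" by (simp add: fun_coord_eq)
lemma gg21: "gen2 \<circ> gen1 = gen1 \<circ> gen2" by (simp add: fun_coord_eq)
lemma gg1f: "gen1 \<circ> (gen1 \<circ> f) = f" by (simp add: comp_assoc[symmetric] gg1)
lemma gg2f: "gen2 \<circ> (gen2 \<circ> f) = f" by (simp add: comp_assoc[symmetric] gg2)
lemma gg21f: "gen2 \<circ> (gen1 \<circ> f) = gen1 \<circ> (gen2 \<circ> f)" by (simp add: comp_assoc[symmetric] gg21)
lemmas gsimps = gg1 gg2 gg21 gg1f gg2f gg21f comp_assoc

lemma G_eq: "G212 = {id, gen1, gen2, gen1 \<circ> gen2}"
proof
  show "G212 \<subseteq> {id, gen1, gen2, gen1 \<circ> gen2}"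
  proof
    fix g assume "g \<in> G212" then show "g \<in> {id, gen1, gen2, gen1 \<circ> gen2}"
      by induct (auto simp only: gsimps insert_iff empty_iff id_comp comp_id)
  qed
next
  have "gen1 \<circ> gen2 \<in> G212" using G_id G_gen1 G_gen2 by fastforce
  then show "{id, gen1, gen2, gen1 \<circ> gen2} \<subseteq> G212"
    using G_id G_gen1[OF G_id] G_gen2[OF G_id] by simp
qed

lemma G_comp: "\<sigma> \<in> G212 \<Longrightarrow> \<tau> \<in> G212 \<Longrightarrow> \<sigma> \<circ> \<tau> \<in> G212"
  unfolding G_eq by (auto simp only: gsimps insert_iff empty_iff id_comp comp_id)

lemma G_inv: "\<sigma> \<in> G212 \<Longrightarrow> \<sigma> \<circ> \<sigma> = id"
  unfolding G_eq by (auto simp only: gsimps insert_iff empty_iff id_comp comp_id)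

lemma perm_act_comp: "perm_act \<sigma> (perm_act \<tau> p) = perm_act (\<tau> \<circ> \<sigma>) p"
  by (simp add: perm_act_def vec_eq_iff)

lemma perm_act_id[simp]: "perm_act id p = p"
  by (simp add: perm_act_def vec_eq_iff)

lemma q_act: assumes "\<sigma> \<in> G212" shows "q212 (perm_act \<sigma> p) = q212 p"
proof
  show "q212 (perm_act \<sigma> p) \<subseteq> q212 p"
    unfolding q212_def perm_act_comp using G_comp[OF assms] by blast
  show "q212 p \<subseteq> q212 (perm_act \<sigma> p)"
  proof
    fix x assume "x \<in> q212 p"
    then obtain \<tau> where t: "\<tau> \<in> G212" "x = perm_act \<tau> p" unfolding q212_def by blast
    have "x = perm_act (\<sigma> \<circ> \<tau>) (perm_act \<sigma> p)"
      unfolding perm_act_comp t(2) comp_assoc[symmetric] G_inv[OF assms] by simp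
    then show "x \<in> q212 (perm_act \<sigma> p)" unfolding q212_def using G_comp[OF assms t(1)] by blast
  qed
qed

lemma q_eq: assumes "q212 x = q212 y" shows "\<exists>\<sigma>\<in>G212. x = perm_act \<sigma> y"
proof -
  have "x \<in> q212 x" unfolding q212_def using G_id by force
  then show ?thesis using assms unfolding q212_def by auto
qed

definition cc :: "real^coord" where "cc = (\<chi> i. 1/6)"

lemma perm_act_cc: "perm_act \<sigma> cc = cc"
  by (simp add: perm_act_def cc_def vec_eq_iff)

definition hh :: "real \<Rightarrow> real^coord \<Rightarrow> real^coord" where
  "hh t p = (1 - t) *\<^sub>R p + t *\<^sub>R cc"

lemma perm_act_hh: "perm_act \<sigma> (hh t p) = hh t (perm_act \<sigma> p)"
  by (simp add: perm_act_def cc_def hh_def vec_eq_iff)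

lemma hh_image: "hh t ` q212 p = q212 (hh t p)"
proof (intro equalityI subsetI)
  fix y assume "y \<in> hh t ` q212 p"
  then obtain \<sigma> where s: "\<sigma> \<in> G212" "y = hh t (perm_act \<sigma> p)" by (auto simp: q212_def)
  then have "y = perm_act \<sigma> (hh t p)" by (simp add: perm_act_hh)
  then show "y \<in> q212 (hh t p)" using s(1) unfolding q212_def by blast
next
  fix y assume "y \<in> q212 (hh t p)"
  then obtain \<sigma> where s: "\<sigma> \<in> G212" "y = perm_act \<sigma> (hh t p)" by (auto simp: q212_def)
  then have "y = hh t (perm_act \<sigma> p)" by (simp add: perm_act_hh)
  then show "y \<in> hh t ` q212 p" using s(1) unfolding q212_def by blast
qed

lemma openin_M212: "openin M212 U \<longleftrightarrow> U \<subseteq> q212 ` X1 \<and> openin (top_of_set X1) {x \<in> X1. q212 x \<in> U}"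
  unfolding M212_def quot_topology_def topology_inverse'[OF istopology_quot] by simp

lemma topspace_M212: "topspace M212 = q212 ` X1"
proof
  show "topspace M212 \<subseteq> q212 ` X1" unfolding topspace_def openin_M212 by blast
  have e: "{x \<in> X1. q212 x \<in> q212 ` X1} = X1" by auto
  have "openin M212 (q212 ` X1)" unfolding openin_M212 e using openin_topspace[of "top_of_set X1"] by simp
  then show "q212 ` X1 \<subseteq> topspace M212" by (rule openin_subset)
qed

definition KK :: "(real^coord) set" where
  "KK = {p \<in> X1. p $ Cw \<le> p $ Cx \<and> p $ Cx \<le> 2 * p $ Cw \<and>
      p $ Cx + p $ Cy + p $ Cz + p $ Cu + p $ Cv + p $ Cw = 1}"

lemma link_eq: "link_Mpl212 = q212 ` KK"
  unfolding link_Mpl212_def KK_def ..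

lemma hh_comp: "hh t p $ i = (1 - t) * p $ i + t / 6"
  by (simp add: hh_def cc_def)

lemma hh_X1: assumes "t \<in> {0..1}" "p \<in> X1" shows "hh t p \<in> X1"
  using assms unfolding X1_def by (auto simp: hh_comp)

lemma hh_KK: assumes "t \<in> {0..1}" "p \<in> KK" shows "hh t p \<in> KK"
proof -
  have t: "0 \<le> 1 - t" "0 \<le> t" using assms(1) by auto
  have p: "p \<in> X1" "p $ Cw \<le> p $ Cx" "p $ Cx \<le> 2 * p $ Cw"
     "p $ Cx + p $ Cy + p $ Cz + p $ Cu + p $ Cv + p $ Cw = 1" using assms(2) unfolding KK_def by auto
  have 1: "(1 - t) * p $ Cw \<le> (1 - t) * p $ Cx" using mult_left_mono[OF p(2) t(1)] .
  have 2: "(1 - t) * p $ Cx \<le> (1 - t) * (2 * p $ Cw)" using mult_left_mono[OF p(3) t(1)] .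
  have 3: "(1 - t) * p $ Cx + t / 6 + ((1 - t) * p $ Cy + t / 6) + ((1 - t) * p $ Cz + t / 6)
     + ((1 - t) * p $ Cu + t / 6) + ((1 - t) * p $ Cv + t / 6) + ((1 - t) * p $ Cw + t / 6)
     = (1 - t) * (p $ Cx + p $ Cy + p $ Cz + p $ Cu + p $ Cv + p $ Cw) + t"
    by (simp add: algebra_simps)
  show ?thesis unfolding KK_def using hh_X1[OF assms(1) p(1)] 1 2 3 p(4) t
    by (auto simp: hh_comp)
qed

lemma perm_act_X1: "p \<in> X1 \<Longrightarrow> perm_act \<sigma> p \<in> X1"
  unfolding X1_def perm_act_def by simp

lemma cont_perm: "continuous_on UNIV (perm_act \<sigma>)"
  unfolding perm_act_def by (intro continuous_intros)

lemma W_open: assumes "open P" shows "openin M212 (q212 ` (P \<inter> X1))"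
proof -
  have eq: "{x \<in> X1. q212 x \<in> q212 ` (P \<inter> X1)} = X1 \<inter> (\<Union>\<sigma>\<in>G212. perm_act \<sigma> -` P)"
  proof (intro equalityI subsetI)
    fix x assume "x \<in> {x \<in> X1. q212 x \<in> q212 ` (P \<inter> X1)}"
    then obtain y where y: "x \<in> X1" "y \<in> P" "q212 x = q212 y" by auto
    then obtain \<sigma> where "\<sigma> \<in> G212" "y = perm_act \<sigma> x" using q_eq[of y x] by auto
    then show "x \<in> X1 \<inter> (\<Union>\<sigma>\<in>G212. perm_act \<sigma> -` P)" using y by auto
  next
    fix x assume "x \<in> X1 \<inter> (\<Union>\<sigma>\<in>G212. perm_act \<sigma> -` P)"
    then obtain \<sigma> where s: "x \<in> X1" "\<sigma> \<in> G212" "perm_act \<sigma> x \<in> P" by auto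
    then have "q212 x = q212 (perm_act \<sigma> x)" using q_act by metis
    then show "x \<in> {x \<in> X1. q212 x \<in> q212 ` (P \<inter> X1)}" using s perm_act_X1 by blast
  qed
  have "open (perm_act \<sigma> -` P)" for \<sigma>
    using open_vimage[OF assms cont_perm] by simp
  then have "open (\<Union>\<sigma>\<in>G212. perm_act \<sigma> -` P)" by blast
  then show ?thesis unfolding openin_M212 eq using openin_open_Int[of _ X1] by (auto simp: Int_commute)
qed

definition Hm :: "real \<times> (real^coord) set \<Rightarrow> (real^coord) set" where
  "Hm z = (if fst z = 1 then q212 cc else hh (fst z) ` snd z)"

lemma Hm_q: "Hm (t, q212 p) = q212 (hh t p)"
proof (cases "t = 1")
  case True then show ?thesis by (simp add: Hm_def hh_def)
next
  case False then show ?thesis by (simp add: Hm_def hh_image)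
qed

lemma topspace_L: "topspace (subtopology M212 link_Mpl212) = q212 ` KK"
  unfolding topspace_subtopology topspace_M212 link_eq KK_def by auto

lemma Hm_cont: "continuous_map (prod_topology (top_of_set {0..1::real}) (subtopology M212 link_Mpl212))
   (subtopology M212 link_Mpl212) Hm"
  unfolding continuous_map_def
proof (intro conjI allI impI)
  show "Hm \<in> topspace (prod_topology (top_of_set {0..1}) (subtopology M212 link_Mpl212))
     \<rightarrow> topspace (subtopology M212 link_Mpl212)"
  proof
    fix z assume "z \<in> topspace (prod_topology (top_of_set {0..1::real}) (subtopology M212 link_Mpl212))"
    then obtain t p where tp: "z = (t, q212 p)" "t \<in> {0..1}" "p \<in> KK"
      unfolding topspace_L topspace_prod_topology by auto
    then show "Hm z \<in> topspace (subtopology M212 link_Mpl212)"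
      unfolding topspace_L using hh_KK[OF tp(2,3)] by (simp add: Hm_q)
  qed
next
  fix V assume "openin (subtopology M212 link_Mpl212) V"
  then obtain U where U: "openin M212 U" "V = U \<inter> link_Mpl212" unfolding openin_subtopology by auto
  obtain A' where A': "open A'" "{x \<in> X1. q212 x \<in> U} = X1 \<inter> A'"
    using U(1) unfolding openin_M212 openin_open by auto
  have oA: "open ((\<lambda>z. hh (fst z) (snd z)) -` A')"
    unfolding hh_def by (rule open_vimage[OF A'(1)]) (intro continuous_intros)
  show "openin (prod_topology (top_of_set {0..1}) (subtopology M212 link_Mpl212))
     {x \<in> topspace (prod_topology (top_of_set {0..1}) (subtopology M212 link_Mpl212)). Hm x \<in> V}"
  proof (subst openin_subopen, intro ballI)
    fix z assume z: "z \<in> {x \<in> topspace (prod_topology (top_of_set {0..1}) (subtopology M212 link_Mpl212)). Hm x \<in> V}"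
    obtain t0 p0 where tp: "z = (t0, q212 p0)" "t0 \<in> {0..1}" "p0 \<in> KK"
      using z unfolding topspace_L topspace_prod_topology by auto
    have "q212 (hh t0 p0) \<in> U" using z tp U(2) by (simp add: Hm_q)
    moreover have "hh t0 p0 \<in> X1" using hh_KK[OF tp(2,3)] unfolding KK_def by auto
    ultimately have "hh t0 p0 \<in> A'" using A'(2) by blast
    then have inA: "(t0, p0) \<in> (\<lambda>z. hh (fst z) (snd z)) -` A'" by simp
    obtain Ta Pb where TP: "open Ta" "open Pb" "(t0, p0) \<in> Ta \<times> Pb"
      "Ta \<times> Pb \<subseteq> (\<lambda>z. hh (fst z) (snd z)) -` A'"
      by (rule open_prod_elim[OF oA inA])
    define N where "N = (Ta \<inter> {0..1}) \<times> (q212 ` (Pb \<inter> X1) \<inter> link_Mpl212)"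
    have "openin (top_of_set {0..1::real}) (Ta \<inter> {0..1})"
      using openin_open_Int[OF TP(1), of "{0..1::real}"] by (simp add: Int_commute)
    moreover have "openin (subtopology M212 link_Mpl212) (q212 ` (Pb \<inter> X1) \<inter> link_Mpl212)"
      using W_open[OF TP(2)] unfolding openin_subtopology by blast
    ultimately have "openin (prod_topology (top_of_set {0..1}) (subtopology M212 link_Mpl212)) N"
      unfolding N_def openin_prod_Times_iff by blast
    moreover have "z \<in> N"
    proof -
      have "p0 \<in> X1" using tp(3) unfolding KK_def by blast
      moreover have "q212 p0 \<in> link_Mpl212" using tp(3) unfolding link_eq by blast
      ultimately show ?thesis unfolding N_def using tp(1,2) TP(3) by blast
    qed
    moreover have "N \<subseteq> {x \<in> topspace (prod_topology (top_of_set {0..1}) (subtopology M212 link_Mpl212)). Hm x \<in> V}"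
    proof
      fix y assume y: "y \<in> N"
      then obtain t p where tp2: "y = (t, q212 p)" "t \<in> Ta" "t \<in> {0..1}" "p \<in> Pb" "p \<in> X1"
        "q212 p \<in> link_Mpl212" unfolding N_def by auto
      then obtain p' where p': "p' \<in> KK" "q212 p = q212 p'" unfolding link_eq by auto
      have "hh t p \<in> A'" using TP(4) tp2 by auto
      moreover have "hh t p \<in> X1" using hh_X1 tp2 by auto
      ultimately have "q212 (hh t p) \<in> U" using A'(2) by blast
      moreover have "q212 (hh t p) \<in> link_Mpl212"
      proof -
        have "q212 (hh t p) = q212 (hh t p')" using Hm_q[of t p, symmetric] Hm_q[of t p'] p'(2) by simp
        then show ?thesis using hh_KK[OF tp2(3) p'(1)] unfolding link_eq by blast
      qed
      moreover have "y \<in> topspace (prod_topology (top_of_set {0..1}) (subtopology M212 link_Mpl212))"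
        using tp2 p' unfolding topspace_L topspace_prod_topology by auto
      ultimately show "y \<in> {x \<in> topspace (prod_topology (top_of_set {0..1}) (subtopology M212 link_Mpl212)). Hm x \<in> V}"
        using tp2 U(2) by (simp add: Hm_q)
    qed
    ultimately show "\<exists>T. openin (prod_topology (top_of_set {0..1}) (subtopology M212 link_Mpl212)) T \<and> z \<in> T \<and>
       T \<subseteq> {x \<in> topspace (prod_topology (top_of_set {0..1}) (subtopology M212 link_Mpl212)). Hm x \<in> V}"
      by blast
  qed
qed

theorem mainTheorem6:
  shows "contractible_space (subtopology M212 link_Mpl212)"
  unfolding contractible_space_def homotopic_with_def
proof (intro exI conjI)
  show "continuous_map (prod_topology (top_of_set {0..1::real}) (subtopology M212 link_Mpl212))
   (subtopology M212 link_Mpl212) Hm" by (rule Hm_cont)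
  show "\<forall>x. Hm (0, x) = id x" by (simp add: Hm_def hh_def)
  show "\<forall>x. Hm (1, x) = q212 cc" by (simp add: Hm_def)
qed simp

end
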